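(* Let $A\in\mathbb{R}^{3\times 3}$ be an upper triangular $Z$-matrix whose diagonal entries are all nonnegative. If $A$ is a Karamardian matrix, then $A$ is range monotone.
   Context: A $Z$-matrix is a real square matrix whose off-diagonal entries are nonpositive. A square matrix $M$ is range monotone if $Mx\ge 0$ and $x\in R(M)$ imply $x\ge 0$. For $A\in\mathbb{R}^{n\times n}$ let $K_A=\mathbb{R}^n_+\cap R(A)$ and $K_A^*=\{y\in\mathbb{R}^n: x^Ty\ge 0 \text{ for all } x\in K_A\}$ (one has $K_A^*=\mathbb{R}^n_++N(A^T)$, and its interior is $\{a+b: a>0,\ b\in N(A^T)\}$). For $q\in\mathbb{R}^n$, LCP$(A,K_A,q)$ is to find $x$ with $x\in K_A$, $Ax+q\in K_A^*$, $x^T(Ax+q)=0$. $A$ is a Karamardian matrix if $K_A\ne\{0\}$ and there exists $d$ in the interior of $K_A^*$ such that both LCP$(A,K_A,0)$ and LCP$(A,K_A,d)$ have $x=0$ as their only solution. *)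

theory Defs
  imports "HOL-Analysis.Analysis"
begin

text \<open>Vectors in R^n are \<open>real^'n\<close>, matrices are \<open>real^'n^'n\<close>; x >= 0 is componentwise.\<close>

definition nonneg_vec :: "real^'n \<Rightarrow> bool" where
  "nonneg_vec x \<longleftrightarrow> (\<forall>i. 0 \<le> x $ i)"

definition z_matrix :: "real^'n^'n \<Rightarrow> bool" where
  "z_matrix A \<longleftrightarrow> (\<forall>i j. i \<noteq> j \<longrightarrow> A $ i $ j \<le> 0)"

definition range_monotone :: "real^'n^'n \<Rightarrow> bool" where
  "range_monotone M \<longleftrightarrow>
     (\<forall>x. nonneg_vec (M *v x) \<and> x \<in> range ((*v) M) \<longrightarrow> nonneg_vec x)"

definition K_cone :: "real^'n^'n \<Rightarrow> (real^'n) set" where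
  "K_cone A = {x. nonneg_vec x} \<inter> range ((*v) A)"

definition dual_cone :: "(real^'n) set \<Rightarrow> (real^'n) set" where
  "dual_cone K = {y. \<forall>x\<in>K. 0 \<le> x \<bullet> y}"

definition LCP_solution :: "real^'n^'n \<Rightarrow> real^'n \<Rightarrow> real^'n \<Rightarrow> bool" where
  "LCP_solution A q x \<longleftrightarrow>
     x \<in> K_cone A \<and> A *v x + q \<in> dual_cone (K_cone A) \<and> x \<bullet> (A *v x + q) = 0"

definition karamardian :: "real^'n^'n \<Rightarrow> bool" where
  "karamardian A \<longleftrightarrow> K_cone A \<noteq> {0} \<and>
     (\<exists>d \<in> interior (dual_cone (K_cone A)).
        (\<forall>x. LCP_solution A 0 x \<longrightarrow> x = 0) \<and> (\<forall>x. LCP_solution A d x \<longrightarrow> x = 0))"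

end

theory Submission
  imports Defs
begin

lemma posc: "0<(f::real) \<Longrightarrow> 0 \<le> f*t \<Longrightarrow> 0 \<le> t" by (simp add: zero_le_mult_iff)

lemma scalar:
 fixes a b c d e f x1 x2 x3 y1 y2 y3 :: real
 assumes s: "0\<le>a" "0\<le>d" "0\<le>f" "b\<le>0" "c\<le>0" "e\<le>0"
 and H: "\<And>z1 z2 z3 w1 w2 w3. z1 = a*w1+b*w2+c*w3 \<Longrightarrow> z2 = d*w2+e*w3 \<Longrightarrow> z3 = f*w3 \<Longrightarrow>
    0\<le>z1 \<Longrightarrow> 0\<le>z2 \<Longrightarrow> 0\<le>z3 \<Longrightarrow> 0 \<le> a*z1+b*z2+c*z3 \<Longrightarrow> 0 \<le> d*z2+e*z3 \<Longrightarrow> 0 \<le> f*z3 \<Longrightarrow>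
    z1*(a*z1+b*z2+c*z3) + z2*(d*z2+e*z3) + z3*(f*z3) = 0 \<Longrightarrow> z1=0 \<and> z2=0 \<and> z3=0"
 and x: "x1 = a*y1+b*y2+c*y3" "x2 = d*y2+e*y3" "x3 = f*y3"
 and Ax: "0 \<le> a*x1+b*x2+c*x3" "0 \<le> d*x2+e*x3" "0 \<le> f*x3"
 shows "0\<le>x1 \<and> 0\<le>x2 \<and> 0\<le>x3"
proof -
  have notP1: "\<not>(d=0 \<and> f=0 \<and> e<0)"
  proof
    assume P: "d=0 \<and> f=0 \<and> e<0"
    show False
    proof (cases "a>0")
      case True
      have "a*((-b - c*a/e)/a) + b*0 + c*(a/e) = -b" using True P by (simp add: field_simps)
      from H[OF this[symmetric], of a 0] P True s show False by auto
    next
      case False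
      hence a0: "a=0" using s by auto
      show False
      proof (cases "b=0")
        case True
        from H[of "-c" 0 0 "-1" "-e" 0] P a0 True s show False by auto
      next
        case False
        from H[of 1 0 "1/b" 0 0 0] P a0 False s show False by auto
      qed
    qed
  qed
  have noE1: "\<not>(b*w2+c*w3 = 1 \<and> d*w2+e*w3=0 \<and> f*w3=0)" if "a=0" for w2 w3
  proof
    assume "b*w2+c*w3 = 1 \<and> d*w2+e*w3=0 \<and> f*w3=0"
    with H[of 1 0 w2 w3 0 0] that show False by auto
  qed
  have y3: "f > 0 \<Longrightarrow> 0 \<le> y3"
    using Ax(3) x(3) by (simp add: zero_le_mult_iff)
  have h3: "0 \<le> x3"
    using y3 x(3) s by (cases "f>0") auto
  have h2: "0 \<le> x2"
  proof (cases "d>0")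
    case True
    have "e*x3 \<le> 0" using s h3 by (simp add: mult_nonpos_nonneg)
    then have "0 \<le> d*x2" using Ax(2) by linarith
    then show ?thesis using True by (simp add: zero_le_mult_iff)
  next
    case False
    hence d0: "d=0" using s by auto
    show ?thesis
    proof (cases "f>0")
      case True
      have "e*x3 = f*(e*y3)" using x by simp
      moreover have "e*y3 \<le> 0" using y3 True s by (simp add: mult_nonpos_nonneg)
      moreover have "0 \<le> f*(e*y3)" using Ax(2) d0 \<open>e*x3 = f*(e*y3)\<close> by simp
      ultimately have "e*y3 = 0" using posc[OF True] by (meson order_antisym)
      then show ?thesis using x(2) d0 by (metis add_0 mult_zero_left order_refl)
    next
      case False
      then have "f=0" using s by auto
      then have "e=0" using notP1 d0 s by auto
      then show ?thesis using x d0 by simp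
    qed
  qed
  have h1: "0 \<le> x1"
  proof (cases "a>0")
    case True
    have "b*x2 \<le> 0" "c*x3 \<le> 0" using s h2 h3 by (simp_all add: mult_nonpos_nonneg)
    then have "0 \<le> a*x1" using Ax(1) by linarith
    then show ?thesis using True by (simp add: zero_le_mult_iff)
  next
    case False
    hence a0: "a=0" using s by auto
    have "b*x2 \<le> 0" "c*x3 \<le> 0" using s h2 h3 by (simp_all add: mult_nonpos_nonneg)
    moreover have "a*x1 = 0" using a0 by simp
    ultimately have bx2: "b*x2 = 0" and cx3: "c*x3 = 0" using Ax(1) by linarith+
    show ?thesis
    proof (cases "d>0")
      case dpos: True
      show ?thesis
      proof (cases "f>0")
        case fpos: True
        have cy3: "c*y3 = 0" using cx3 x(3) fpos by simp
        show ?thesis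
        proof (cases "b=0")
          case True then show ?thesis using x a0 cy3 by simp
        next
          case False
          hence "x2 = 0" using bx2 by simp
          hence ex3: "0 \<le> e*x3" using Ax(2) by simp
          have "e*x3 = f*(e*y3)" using x by simp
          moreover have "e*y3 \<le> 0" using y3 fpos s by (simp add: mult_nonpos_nonneg)
          moreover have "0 \<le> f*(e*y3)" using ex3 \<open>e*x3 = f*(e*y3)\<close> by simp
          ultimately have "e*y3 = 0" using posc[OF fpos] by (meson order_antisym)
          hence "d*y2 = 0" using \<open>x2=0\<close> x(2) by linarith
          hence "y2 = 0" using dpos by simp
          then show ?thesis using x a0 cy3 by simp
        qed
      next
        case False
        hence f0: "f=0" using s by auto
        show ?thesis
        proof (cases "c*d = b*e")
          case True
          have "d*x1 = b*x2" using x a0 True by (simp add: algebra_simps)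
          hence "x1 = 0" using bx2 dpos by simp
          thus ?thesis by simp
        next
          case False
          define D where "D = b*e - c*d"
          have D: "D \<noteq> 0" using False unfolding D_def by simp
          have "b*(e/D)+c*(-d/D) = (b*e - c*d)/D" by (simp add: diff_divide_distrib)
          also have "\<dots> = 1" using D unfolding D_def by simp
          finally have "b*(e/D)+c*(-d/D) = 1" .
          moreover have "d*(e/D)+e*(-d/D) = 0" by (simp add: field_simps)
          ultimately show ?thesis using noE1[OF a0, of "e/D" "-d/D"] f0 by simp
        qed
      qed
    next
      case False
      hence d0: "d=0" using s by auto
      show ?thesis
      proof (cases "b=0")
        case False
        have "b*(1/b)+c*0 = 1" using False by simp
        then show ?thesis using noE1[OF a0, of "1/b" 0] d0 by simp
      next
        case b0: True
        show ?thesis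
        proof (cases "f>0")
          case True
          then have "c*y3 = 0" using cx3 x(3) by simp
          moreover have "x1 = c*y3" using x(1) a0 b0 by simp
          ultimately show ?thesis by linarith
        next
          case False
          hence f0: "f=0" using s by auto
          hence e0: "e=0" using notP1 d0 s by auto
          show ?thesis
          proof (cases "c=0")
            case True then show ?thesis using x a0 b0 by simp
          next
            case False
            have "b*0+c*(1/c) = 1" using False by simp
            then show ?thesis using noE1[OF a0, of 0 "1/c"] d0 e0 f0 by simp
          qed
        qed
      qed
    qed
  qed
  show ?thesis using h1 h2 h3 by simp
qed

theorem mainTheorem9:
  fixes A :: "real^3^3"
  assumes "z_matrix A"
    and "\<forall>i j. j < i \<longrightarrow> A $ i $ j = 0"
    and "\<forall>i. 0 \<le> A $ i $ i"
    and "karamardian A"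
  shows "range_monotone A"
proof -
  have o: "(3::3) < 1" "(1::3) < 2" "(3::3)<2" by (simp_all add: less_bit1_def bit1.Rep_0 bit1.Rep_1 bit1.Rep_numeral)
  have n: "(3::3) \<noteq> 1" "(1::3) \<noteq> 2" "(3::3)\<noteq>2" using o by (simp_all add: order.strict_implies_not_eq)
  define a where "a = A$3$3"
  define b where "b = A$3$1"
  define c where "c = A$3$2"
  define d where "d = A$1$1"
  define e where "e = A$1$2"
  define f where "f = A$2$2"
  have z: "A$1$3 = 0" "A$2$3 = 0" "A$2$1 = 0"
    using assms(2)[rule_format, OF o(1)] assms(2)[rule_format, OF o(3)] assms(2)[rule_format, OF o(2)] by simp_all
  have s: "0\<le>a" "0\<le>d" "0\<le>f" "b\<le>0" "c\<le>0" "e\<le>0"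
    using assms(3) assms(1)[unfolded z_matrix_def, rule_format, OF n(1)] assms(1)[unfolded z_matrix_def, rule_format, OF n(3)]
      assms(1)[unfolded z_matrix_def, rule_format, OF n(2)]
    unfolding a_def b_def c_def d_def e_def f_def by simp_all
  have r: "(A *v v)$3 = a* v$3 + b* v$1 + c* v$2" "(A *v v)$1 = d* v$1 + e* v$2" "(A *v v)$2 = f* v$2" for v
    unfolding matrix_vector_mult_def a_def b_def c_def d_def e_def f_def using z
    by (simp_all add: sum_3 algebra_simps)
  have nn: "nonneg_vec v \<longleftrightarrow> 0 \<le> v$1 \<and> 0 \<le> v$2 \<and> 0 \<le> v$3" for v :: "real^3"
    unfolding nonneg_vec_def forall_3 by simp
  have inn: "u \<bullet> v = u$1* v$1 + u$2* v$2 + u$3* v$3" for u v :: "real^3"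
    by (simp add: inner_vec_def sum_3)
  from assms(4) obtain dd where lcp0: "\<And>x. LCP_solution A 0 x \<Longrightarrow> x = 0"
    unfolding karamardian_def by blast
  have H: "z1=0 \<and> z2=0 \<and> z3=0" if
    h: "z1 = a*w1+b*w2+c*w3" "z2 = d*w2+e*w3" "z3 = f*w3"
    "0\<le>z1" "0\<le>z2" "0\<le>z3" "0 \<le> a*z1+b*z2+c*z3" "0 \<le> d*z2+e*z3" "0 \<le> f*z3"
    "z1*(a*z1+b*z2+c*z3) + z2*(d*z2+e*z3) + z3*(f*z3) = 0" for z1 z2 z3 w1 w2 w3
  proof -
    define zv where "zv = (vector [z2, z3, z1] :: real^3)"
    define wv where "wv = (vector [w2, w3, w1] :: real^3)"
    have zc: "zv$1 = z2" "zv$2 = z3" "zv$3 = z1" unfolding zv_def by simp_all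
    have wc: "wv$1 = w2" "wv$2 = w3" "wv$3 = w1" unfolding wv_def by simp_all
    have "zv = A *v wv"
      unfolding vec_eq_iff forall_3 r zc wc using h by simp
    moreover have "nonneg_vec zv" unfolding nn zc using h by simp
    ultimately have K: "zv \<in> K_cone A" unfolding K_cone_def by auto
    have Az: "(A *v zv)$1 = d*z2+e*z3" "(A *v zv)$2 = f*z3" "(A *v zv)$3 = a*z1+b*z2+c*z3"
      unfolding r zc by simp_all
    have D: "A *v zv + 0 \<in> dual_cone (K_cone A)"
      unfolding dual_cone_def
    proof (clarify)
      fix u assume "u \<in> K_cone A"
      hence "nonneg_vec u" unfolding K_cone_def by simp
      hence u: "0 \<le> u$1" "0 \<le> u$2" "0 \<le> u$3" unfolding nn by auto
      have "0 \<le> u$1*(d*z2+e*z3)" using u(1) h(8) by (rule mult_nonneg_nonneg)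
      moreover have "0 \<le> u$2*(f*z3)" using u(2) h(9) by (rule mult_nonneg_nonneg)
      moreover have "0 \<le> u$3*(a*z1+b*z2+c*z3)" using u(3) h(7) by (rule mult_nonneg_nonneg)
      ultimately show "0 \<le> u \<bullet> (A *v zv + 0)" unfolding add_0_right inn Az by linarith
    qed
    have "zv \<bullet> (A *v zv + 0) = 0" unfolding add_0_right inn Az zc using h(10) by linarith
    with K D have "LCP_solution A 0 zv" unfolding LCP_solution_def by simp
    hence "zv = 0" by (rule lcp0)
    thus ?thesis using zc by (metis zero_index)
  qed
  show ?thesis unfolding range_monotone_def
  proof (clarify)
    fix x y assume ax: "nonneg_vec (A *v (A *v y))"
    have x: "(A *v y)$3 = a*y$3+b*y$1+c*y$2" "(A *v y)$1 = d*y$1+e*y$2" "(A *v y)$2 = f*y$2"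
      using r by simp_all
    have Ax: "0 \<le> a*(A *v y)$3+b*(A *v y)$1+c*(A *v y)$2" "0 \<le> d*(A *v y)$1+e*(A *v y)$2" "0 \<le> f*(A *v y)$2"
      using ax unfolding nn r[of "A *v y"] by auto
    have "0\<le>(A *v y)$3 \<and> 0\<le>(A *v y)$1 \<and> 0\<le>(A *v y)$2"
      by (rule scalar[OF s H x Ax])
    thus "nonneg_vec (A *v y)" unfolding nn by auto
  qed
qed
end
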